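(* Let $T>0$, $0<\eta<T$ and $0<\alpha<\frac{1}{\eta}$. If $y\in C([0,T],[0,\infty))$, then the unique solution $u$ of the problem \[ u''(t)+y(t)=0,\quad t\in(0,T),\qquad u'(0)=0,\quad u(T)=\alpha\int_0^{\eta}u(s)\,ds \] satisfies $u(t)\ge 0$ for all $t\in[0,T]$. *)

theory Defs
  imports "HOL-Analysis.Analysis"
begin

end

theory Submission
  imports Defs
begin

theorem lemma2p2:
  fixes T \<eta> \<alpha> :: real and y u u' :: "real \<Rightarrow> real"
  assumes "T > 0" and "0 < \<eta>" and "\<eta> < T" and "0 < \<alpha>" and "\<alpha> < 1 / \<eta>"
    and "continuous_on {0..T} y" and "\<forall>t\<in>{0..T}. y t \<ge> 0"
    and "\<forall>t\<in>{0..T}. (u has_real_derivative u' t) (at t within {0..T})"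
    and "\<forall>t\<in>{0<..<T}. (u' has_real_derivative (- y t)) (at t)"
    and "u' 0 = 0"
    and "u T = \<alpha> * integral {0..\<eta>} u"
  shows "\<forall>t\<in>{0..T}. u t \<ge> 0"
proof -
  note du = assms(8) and dv = assms(9)
  have cu: "continuous_on {0..T} u"
    unfolding continuous_on_eq_continuous_within
    using du DERIV_continuous by blast
  have du_in: "(u has_real_derivative u' t) (at t)" if "0 < t" "t < T" for t
  proof -
    have "(u has_real_derivative u' t) (at t within {0..T})" using du that by auto
    thus ?thesis using at_within_Icc_at[of 0 t T] that by simp
  qed
  have mono': "u' b \<le> u' a" if "0 < a" "a < b" "b < T" for a b
  proof -
    have "continuous_on {a..b} u'"
      using dv that by (intro continuous_at_imp_continuous_on) (auto intro: DERIV_isCont)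
    moreover have "\<And>x. a < x \<Longrightarrow> x < b \<Longrightarrow> u' differentiable (at x)"
      using dv that real_differentiable_def by (meson greaterThanLessThan_iff order.strict_trans)
    ultimately obtain l z where z: "a < z" "z < b" "DERIV u' z :> l" "u' b - u' a = (b - a) * l"
      using MVT[OF \<open>a < b\<close>] by blast
    have "(u' has_real_derivative (- y z)) (at z)" using dv z that by auto
    hence "l = - y z" using z(3) DERIV_unique by blast
    moreover have "y z \<ge> 0" using assms(7) z that by auto
    ultimately have "u' b - u' a = - ((b - a) * y z)" using z by simp
    moreover have "(b - a) * y z \<ge> 0" using \<open>y z \<ge> 0\<close> that by simp
    ultimately show ?thesis by linarith
  qed
  have neg': "u' t \<le> 0" if "0 < t" "t < T" for t
  proof (rule ccontr)
    assume "\<not> u' t \<le> 0"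
    hence c: "u' t > 0" by simp
    have "((\<lambda>x. (u x - u 0) / (x - 0)) \<longlongrightarrow> 0) (at 0 within {0..T})"
    proof -
      have "(u has_real_derivative 0) (at 0 within {0..T})" using du assms(1,10) by force
      thus ?thesis using has_field_derivative_iff by blast
    qed
    hence "\<forall>\<^sub>F x in at 0 within {0..T}. (u x - u 0) / (x - 0) < u' t"
      using c order_tendstoD(2) by blast
    then obtain d where d: "d > 0" "\<And>x. x \<in> {0..T} \<Longrightarrow> x \<noteq> 0 \<Longrightarrow> dist x 0 < d \<Longrightarrow> (u x - u 0) / (x - 0) < u' t"
      unfolding eventually_at by blast
    define h where "h = min (d/2) (t/2)"
    have h: "0 < h" "h < t" "h < d" using d that by (auto simp: h_def)
    have "continuous_on {0..h} u" by (rule continuous_on_subset[OF cu]) (use h that in auto)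
    moreover have "\<And>x. 0 < x \<Longrightarrow> x < h \<Longrightarrow> u differentiable (at x)"
      using du_in h that real_differentiable_def by (meson order.strict_trans)
    ultimately obtain l z where z: "0 < z" "z < h" "DERIV u z :> l" "u h - u 0 = (h - 0) * l"
      using MVT[OF \<open>0 < h\<close>] by blast
    have "l = u' z" using z du_in[of z] h that DERIV_unique by auto
    moreover have "u' t \<le> u' z" using mono'[of z t] z h that by auto
    ultimately have "(u h - u 0) / (h - 0) \<ge> u' t" using z h by simp
    moreover have "(u h - u 0) / (h - 0) < u' t" using d(2)[of h] h that by auto
    ultimately show False by simp
  qed
  have anti: "u b \<le> u a" if "0 \<le> a" "a < b" "b \<le> T" for a b
  proof -
    have "continuous_on {a..b} u" by (rule continuous_on_subset[OF cu]) (use that in auto)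
    moreover have "\<And>x. a < x \<Longrightarrow> x < b \<Longrightarrow> u differentiable (at x)"
      using du_in that real_differentiable_def by (meson order.strict_trans1 order.strict_trans2)
    ultimately obtain l z where z: "a < z" "z < b" "DERIV u z :> l" "u b - u a = (b - a) * l"
      using MVT[OF \<open>a < b\<close>] by blast
    have "l = u' z" using z du_in[of z] that DERIV_unique by auto
    hence "l \<le> 0" using neg' z that by auto
    hence "(b - a) * l \<le> 0" using z by (simp add: mult_nonneg_nonpos)
    thus ?thesis using z by linarith
  qed
  have anti2: "u b \<le> u a" if "0 \<le> a" "a \<le> b" "b \<le> T" for a b
    using anti[of a b] that by (cases "a = b") auto
  have cue: "continuous_on {0..\<eta>} u" by (rule continuous_on_subset[OF cu]) (use assms in auto)
  have "integral {0..\<eta>} (\<lambda>_. u \<eta>) \<le> integral {0..\<eta>} u"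
    by (rule integral_le) (use cue integrable_continuous_real anti2 assms in auto)
  hence I: "\<eta> * u \<eta> \<le> integral {0..\<eta>} u" using assms by simp
  have uT: "u T \<ge> 0"
  proof (cases "u \<eta> \<ge> 0")
    case True
    hence "\<alpha> * (\<eta> * u \<eta>) \<ge> 0" using assms by simp
    moreover have "\<alpha> * (\<eta> * u \<eta>) \<le> \<alpha> * integral {0..\<eta>} u"
      using I assms by (intro mult_left_mono) auto
    ultimately show ?thesis using assms(11) by linarith
  next
    case False
    have ae: "\<alpha> * \<eta> < 1" using assms by (simp add: field_simps)
    have "u T \<le> u \<eta>" using anti2[of \<eta> T] assms(2,3) by linarith
    moreover have "\<alpha> * (\<eta> * u \<eta>) \<le> u T"
      using I assms by (simp add: mult_left_mono)
    moreover have "\<alpha> * \<eta> * u \<eta> > u \<eta>"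
    proof -
      have "(1 - \<alpha> * \<eta>) * u \<eta> < 0" using False ae by (simp add: mult_pos_neg)
      thus ?thesis by (simp add: algebra_simps)
    qed
    ultimately show ?thesis by (simp add: mult.assoc)
  qed
  show ?thesis using anti2 uT assms(1) by (meson atLeastAtMost_iff order.trans order_refl)
qed

end
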